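(* Let $L$ be a finite lattice. Then $\mathsf{C}(L)=\mathsf{Pol}_{0,1}(L)$ if and only if the only tolerances on $L$ are $\mathrm{id}_L$ and $L^2$.
   Context: $L$ has bounds $0,1$; $\mathrm{id}_L=\{(x,x):x\in L\}$. An $n$-ary aggregation function on $L$ ($n\ge1$) is a map $A:L^n\to L$, nondecreasing with respect to the componentwise order, with $A(0,\dots,0)=0$ and $A(1,\dots,1)=1$; $\mathsf{C}(L)$ is the set of all aggregation functions on $L$. Polynomials on $L$ are functions $L^n\to L$ obtained from projections and constant functions by finitely many pointwise joins and meets; $\mathsf{Pol}_{0,1}(L)$ is the set of polynomials $p$ with $p(0,\dots,0)=0$ and $p(1,\dots,1)=1$. A tolerance on $L$ is a reflexive, symmetric binary relation $T$ on $L$ such that $(a,b),(c,d)\in T$ imply $(a\vee c,b\vee d)\in T$ and $(a\wedge c,b\wedge d)\in T$. *)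

theory Defs
  imports Main
begin

text \<open>An n-ary operation on L is represented by a function on lists; only its
values on lists of length n are relevant.\<close>

definition aggregation :: "nat \<Rightarrow> ('a::bounded_lattice list \<Rightarrow> 'a) \<Rightarrow> bool" where
  "aggregation n A \<longleftrightarrow>
     (\<forall>xs ys. length xs = n \<and> length ys = n \<and> list_all2 (\<le>) xs ys \<longrightarrow> A xs \<le> A ys)
     \<and> A (replicate n bot) = bot \<and> A (replicate n top) = top"

inductive_set polys :: "nat \<Rightarrow> ('a::lattice list \<Rightarrow> 'a) set" for n :: nat where
  proj: "i < n \<Longrightarrow> (\<lambda>xs. xs ! i) \<in> polys n"
| const: "(\<lambda>xs. c) \<in> polys n"
| join: "p \<in> polys n \<Longrightarrow> q \<in> polys n \<Longrightarrow> (\<lambda>xs. sup (p xs) (q xs)) \<in> polys n"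
| meet: "p \<in> polys n \<Longrightarrow> q \<in> polys n \<Longrightarrow> (\<lambda>xs. inf (p xs) (q xs)) \<in> polys n"

definition pol01 :: "nat \<Rightarrow> ('a::bounded_lattice list \<Rightarrow> 'a) \<Rightarrow> bool" where
  "pol01 n f \<longleftrightarrow> (\<exists>p\<in>polys n. \<forall>xs. length xs = n \<longrightarrow> f xs = p xs)
     \<and> f (replicate n bot) = bot \<and> f (replicate n top) = top"

definition tolerance :: "('a::lattice \<times> 'a) set \<Rightarrow> bool" where
  "tolerance T \<longleftrightarrow> refl T \<and> sym T \<and>
     (\<forall>a b c d. (a, b) \<in> T \<and> (c, d) \<in> T \<longrightarrow>
        (sup a c, sup b d) \<in> T \<and> (inf a c, inf b d) \<in> T)"

end

theory Submission
  imports Defs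
begin

lemma polys_comp:
  assumes "p \<in> polys n" "\<forall>i<n. g i \<in> polys m"
  shows "(\<lambda>xs. p (map (\<lambda>i. g i xs) [0..<n])) \<in> polys m"
  using assms(1)
proof induction
  case (proj i)
  then show ?case using assms(2) by simp
next
  case (const c)
  then show ?case by (simp add: polys.const)
next
  case (join p q)
  then show ?case using polys.join[OF join.IH] by simp
next
  case (meet p q)
  then show ?case using polys.meet[OF meet.IH] by simp
qed

lemma polys_mono:
  "p \<in> polys n \<Longrightarrow> (\<forall>i<n. xs!i \<le> ys!i) \<Longrightarrow> p xs \<le> (p ys :: 'a::lattice)"
  by (induction rule: polys.induct) (fastforce intro: le_supI1 le_supI2 le_infI1 le_infI2)+

lemma polys_tol:
  "p \<in> polys n \<Longrightarrow> tolerance T \<Longrightarrow> (\<forall>i<n. (xs!i, ys!i) \<in> T) \<Longrightarrow> (p xs, p ys) \<in> T"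
  by (induction rule: polys.induct) (auto simp: tolerance_def refl_on_def)

lemma polys_sup_fold:
  "(\<forall>a\<in>set l. (\<lambda>xs. g a xs) \<in> polys n) \<Longrightarrow>
   (\<lambda>xs. foldr sup (map (\<lambda>a. g a xs) l) (bot::'a::bounded_lattice)) \<in> polys n"
proof (induction l)
  case Nil
  then show ?case by (simp add: polys.const)
next
  case (Cons a l)
  then show ?case using polys.join[of "g a" n "\<lambda>xs. foldr sup (map (\<lambda>a. g a xs) l) bot"] by simp
qed

lemma polys_inf_fold:
  "(\<forall>a\<in>set l. (\<lambda>xs. g a xs) \<in> polys n) \<Longrightarrow>
   (\<lambda>xs. foldr inf (map (\<lambda>a. g a xs) l) (top::'a::bounded_lattice)) \<in> polys n"
proof (induction l)
  case Nil
  then show ?case by (simp add: polys.const)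
next
  case (Cons a l)
  then show ?case using polys.meet[of "g a" n "\<lambda>xs. foldr inf (map (\<lambda>a. g a xs) l) top"] by simp
qed

lemma sup_fold_ub: "a \<in> set l \<Longrightarrow> g a \<le> foldr sup (map g l) (bot::'a::bounded_lattice)"
  by (induction l) (auto intro: le_supI2)

lemma sup_fold_lub: "(\<forall>a\<in>set l. g a \<le> z) \<Longrightarrow> foldr sup (map g l) (bot::'a::bounded_lattice) \<le> z"
  by (induction l) auto

lemma inf_fold_lb: "a \<in> set l \<Longrightarrow> foldr inf (map g l) (top::'a::bounded_lattice) \<le> g a"
  by (induction l) (auto intro: le_infI2)

lemma inf_fold_glb: "(\<forall>a\<in>set l. z \<le> g a) \<Longrightarrow> z \<le> foldr inf (map g l) (top::'a::bounded_lattice)"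
  by (induction l) auto

lemma tol_bot_top:
  assumes "tolerance T" "(bot, top) \<in> T"
  shows "T = (UNIV :: ('a::bounded_lattice \<times> 'a) set)"
proof -
  have r: "\<And>x. (x,x) \<in> T" and s: "\<And>x y. (x,y) \<in> T \<Longrightarrow> (y,x) \<in> T"
    and c: "\<And>a b c d. (a,b) \<in> T \<Longrightarrow> (c,d) \<in> T \<Longrightarrow> (sup a c, sup b d) \<in> T \<and> (inf a c, inf b d) \<in> T"
    using assms(1) unfolding tolerance_def refl_on_def sym_def by blast+
  have "(x,y) \<in> T" for x y
  proof -
    have "(top, bot) \<in> T" using s assms(2) by blast
    from c[OF this r[of x]] have 1: "(x, bot) \<in> T" by simp
    from c[OF assms(2) r[of y]] have 2: "(bot, y) \<in> T" by simp
    from c[OF 1 2] show ?thesis by simp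
  qed
  then show ?thesis by auto
qed

lemma pol01_agg:
  assumes "pol01 n f" shows "aggregation n f"
proof -
  obtain p where p: "p \<in> polys n" "\<forall>xs. length xs = n \<longrightarrow> f xs = p xs"
    using assms unfolding pol01_def by blast
  have "f xs \<le> f ys" if "length xs = n" "length ys = n" "list_all2 (\<le>) xs ys" for xs ys
  proof -
    have "\<forall>i<n. xs!i \<le> ys!i" using that by (simp add: list_all2_conv_all_nth)
    then show ?thesis using polys_mono[OF p(1)] p(2) that by simp
  qed
  then show ?thesis using assms unfolding aggregation_def pol01_def by blast
qed

lemma binpoly:
  assumes TS: "\<forall>T :: ('a::bounded_lattice \<times> 'a) set. tolerance T \<longrightarrow> T = Id \<or> T = UNIV"
    and uv: "u \<noteq> v"
  shows "\<exists>p\<in>polys 2. p [u,v] = bot \<and> p [v,u] = (top::'a)"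
proof -
  define R where "R = {(p [u,v], p [v,u]) | p. p \<in> polys 2}"
  have "tolerance R"
    unfolding tolerance_def
  proof (intro conjI)
    show "refl R" unfolding refl_on_def R_def
      by (auto intro!: exI[of _ "\<lambda>xs. _"] polys.const)
    show "sym R" unfolding sym_def R_def
    proof (clarify)
      fix p :: "'a list \<Rightarrow> 'a" assume p: "p \<in> polys 2"
      define g where "g = (\<lambda>i::nat. (\<lambda>xs::'a list. xs ! (1 - i)))"
      have "\<forall>i<2. g i \<in> polys 2" unfolding g_def by (auto intro: polys.proj)
      from polys_comp[OF p this] have "(\<lambda>xs. p (map (\<lambda>i. g i xs) [0..<2])) \<in> polys 2" .
      moreover have "(\<lambda>xs. p (map (\<lambda>i. g i xs) [0..<2])) = (\<lambda>xs. p [xs!1, xs!0])"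
        by (simp add: g_def numeral_2_eq_2)
      ultimately have q: "(\<lambda>xs. p [xs!1, xs!0]) \<in> polys 2" by (simp only:)
      show "\<exists>q. (p [v, u], p [u, v]) = (q [u, v], q [v, u]) \<and> q \<in> polys 2"
      proof (rule exI[of _ "\<lambda>xs. p [xs!1, xs!0]"], rule conjI)
        show "(\<lambda>xs. p [xs!1, xs!0]) \<in> polys 2" by (rule q)
      qed simp
    qed
  next
    show "\<forall>a b c d. (a, b) \<in> R \<and> (c, d) \<in> R \<longrightarrow> (sup a c, sup b d) \<in> R \<and> (inf a c, inf b d) \<in> R"
    proof (intro allI impI)
    fix a b c d assume "(a, b) \<in> R \<and> (c, d) \<in> R"
    then obtain p q where "p \<in> polys 2" "q \<in> polys 2" and eqs: "a = p [u,v]" "b = p [v,u]" "c = q[u,v]" "d = q [v,u]"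
      unfolding R_def by blast
    show "(sup a c, sup b d) \<in> R \<and> (inf a c, inf b d) \<in> R"
    proof
      have "(\<lambda>xs. sup (p xs) (q xs)) \<in> polys 2" using \<open>p \<in> polys 2\<close> \<open>q \<in> polys 2\<close> by (rule polys.join)
      then show "(sup a c, sup b d) \<in> R" unfolding R_def using eqs by (auto intro!: exI[of _ "\<lambda>xs. sup (p xs) (q xs)"])
    next
      have "(\<lambda>xs. inf (p xs) (q xs)) \<in> polys 2" using \<open>p \<in> polys 2\<close> \<open>q \<in> polys 2\<close> by (rule polys.meet)
      then show "(inf a c, inf b d) \<in> R" unfolding R_def using eqs by (auto intro!: exI[of _ "\<lambda>xs. inf (p xs) (q xs)"])
    qed
    qed
  qed
  moreover have "(u,v) \<in> R" unfolding R_def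
    by (auto intro!: exI[of _ "\<lambda>xs. xs!0"] polys.proj)
  ultimately have "R = UNIV" using TS uv by blast
  then have "(bot, top) \<in> R" by simp
  then show ?thesis unfolding R_def by (auto intro: sym)
qed

lemma sep_poly:
  assumes TS: "\<forall>T :: ('a::bounded_lattice \<times> 'a) set. tolerance T \<longrightarrow> T = Id \<or> T = UNIV"
    and cx: "\<not> c \<le> (x::'a)"
  shows "\<exists>q\<in>polys 1. q [x] = bot \<and> (\<forall>ys. c \<le> ys!0 \<longrightarrow> q ys = top)"
proof -
  have "x \<noteq> sup x c" using cx by (metis sup.cobounded2)
  from binpoly[OF TS this] obtain p where p: "p \<in> polys 2" "p [x, sup x c] = bot" "p [sup x c, x] = top"
    by blast
  define g where "g = (\<lambda>i::nat. if i = 0 then (\<lambda>ys::'a list. sup (ys!0) x) else (\<lambda>ys. x))"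
  have "\<forall>i<2. g i \<in> polys 1" unfolding g_def by (auto intro: polys.join polys.proj polys.const)
  from polys_comp[OF p(1) this] have "(\<lambda>ys. p (map (\<lambda>i. g i ys) [0..<2])) \<in> polys 1" .
  moreover have "\<And>ys. map (\<lambda>i. g i ys) [0..<2] = [sup (ys!0) x, x]"
    by (simp add: g_def numeral_2_eq_2)
  ultimately have q: "(\<lambda>ys. p [sup (ys!0) x, x]) \<in> polys 1" by simp
  have "p [x, x] \<le> p [x, sup x c]"
    by (rule polys_mono[OF p(1)]) (auto simp: less_2_cases_iff)
  then have 1: "p [sup ([x]!0) x, x] = bot" using p(2) by (simp add: bot_unique)
  have 2: "p [sup (ys!0) x, x] = top" if "c \<le> ys!0" for ys
  proof -
    have "p [sup x c, x] \<le> p [sup (ys!0) x, x]"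
      by (rule polys_mono[OF p(1)]) (auto simp: less_2_cases_iff that intro: le_supI1 le_supI2)
    then show ?thesis using p(3) by (simp add: top_unique)
  qed
  show ?thesis apply (rule bexI[OF _ q]) using 1 2 by auto
qed

lemma thr_poly:
  assumes TS: "\<forall>T :: ('a::{finite,bounded_lattice} \<times> 'a) set. tolerance T \<longrightarrow> T = Id \<or> T = UNIV"
  shows "\<exists>U\<in>polys 1. \<forall>ys. U ys = (if c \<le> ys!0 then top else (bot::'a))"
proof -
  have "\<forall>x. \<exists>q. \<not> c \<le> x \<longrightarrow> q\<in>polys 1 \<and> q [x] = bot \<and> (\<forall>ys. c \<le> ys!0 \<longrightarrow> q ys = top)"
    using sep_poly[OF TS] by blast
  then obtain Q where Q: "\<And>x. \<not> c \<le> x \<Longrightarrow> Q x \<in> polys 1 \<and> Q x [x] = bot \<and> (\<forall>ys. c \<le> ys!0 \<longrightarrow> Q x ys = top)"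
    by metis
  obtain es :: "'a list" where es: "set es = UNIV" using finite_list[of "UNIV :: 'a set"] by auto
  define xl where "xl = filter (\<lambda>x. \<not> c \<le> x) es"
  define U where "U = (\<lambda>ys. foldr inf (map (\<lambda>x. Q x ys) xl) (top::'a))"
  have "U \<in> polys 1" unfolding U_def
    by (rule polys_inf_fold) (use Q in \<open>auto simp: xl_def\<close>)
  moreover have "U ys = (if c \<le> ys!0 then top else bot)" for ys
  proof (cases "c \<le> ys!0")
    case True
    then have "top \<le> U ys" unfolding U_def by (intro inf_fold_glb) (auto simp: xl_def Q)
    then show ?thesis using True by (simp add: top_unique)
  next
    case False
    have "ys!0 \<in> set xl" using False es by (auto simp: xl_def)
    then have "U ys \<le> Q (ys!0) ys" unfolding U_def by (rule inf_fold_lb)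
    moreover have "Q (ys!0) ys \<le> Q (ys!0) [ys!0]"
      using Q[OF False] by (intro polys_mono[of _ 1]) auto
    ultimately have "U ys \<le> bot" using Q[OF False] by simp
    then show ?thesis using False by (simp add: bot_unique)
  qed
  ultimately show ?thesis by blast
qed

lemma agg_pol01:
  assumes TS: "\<forall>T :: ('a::{finite,bounded_lattice} \<times> 'a) set. tolerance T \<longrightarrow> T = Id \<or> T = UNIV"
    and agg: "aggregation n (f :: 'a list \<Rightarrow> 'a)"
  shows "pol01 n f"
proof -
  have "\<forall>c. \<exists>U. U\<in>polys 1 \<and> (\<forall>ys. U ys = (if c \<le> ys!0 then top else (bot::'a)))"
    using thr_poly[OF TS] by blast
  then obtain U where U: "\<And>c. U c \<in> polys 1" "\<And>c ys. U c ys = (if c \<le> ys!0 then top else (bot::'a))"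
    by metis
  have fm: "f xs \<le> f ys" if "length xs = n" "length ys = n" "list_all2 (\<le>) xs ys" for xs ys
    using agg that unfolding aggregation_def by blast
  have "finite {xs :: 'a list. set xs \<subseteq> UNIV \<and> length xs = n}"
    by (rule finite_lists_length_eq) simp
  then obtain As where As: "set As = {xs :: 'a list. length xs = n}"
    using finite_list by fastforce
  define thr where "thr = (\<lambda>a xs. foldr inf (map (\<lambda>i. U (a!i) [xs!i]) [0..<n]) (top::'a))"
  have thr_poly: "(\<lambda>xs. thr a xs) \<in> polys n" for a
    unfolding thr_def
  proof (rule polys_inf_fold, clarify)
    fix i assume "i \<in> set [0..<n]"
    then have i: "i < n" by simp
    have "\<forall>j<1. (\<lambda>j xs. xs!i) j \<in> polys n" using i by (auto intro: polys.proj)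
    from polys_comp[OF U(1)[of "a!i"] this] show "(\<lambda>xs. U (a!i) [xs!i]) \<in> polys n" by simp
  qed
  have thr_val: "thr a xs = (if list_all2 (\<le>) a xs then top else bot)"
    if la: "length a = n" and lx: "length xs = n" for a xs
  proof (cases "list_all2 (\<le>) a xs")
    case True
    then have "top \<le> thr a xs" using that unfolding thr_def
      by (intro inf_fold_glb) (auto simp: U(2) list_all2_conv_all_nth)
    then show ?thesis using True by (simp add: top_unique)
  next
    case False
    then obtain i where i: "i < n" "\<not> a!i \<le> xs!i" using la lx by (auto simp: list_all2_conv_all_nth)
    then have "thr a xs \<le> U (a!i) [xs!i]" unfolding thr_def by (intro inf_fold_lb[where g="\<lambda>i. U (a!i) [xs!i]"]) simp
    then have "thr a xs \<le> bot" using i by (simp add: U(2))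
    then show ?thesis using False by (simp add: bot_unique)
  qed
  define P where "P = (\<lambda>xs. foldr sup (map (\<lambda>a. inf (f a) (thr a xs)) As) (bot::'a))"
  have "P \<in> polys n" unfolding P_def
    by (rule polys_sup_fold) (auto intro: polys.meet polys.const thr_poly)
  moreover have "f xs = P xs" if "length xs = n" for xs
  proof (rule antisym)
    have "xs \<in> set As" using As that by simp
    then have "inf (f xs) (thr xs xs) \<le> P xs" unfolding P_def
      by (rule sup_fold_ub[where g="\<lambda>a. inf (f a) (thr a xs)"])
    moreover have "list_all2 (\<le>) xs xs" by (simp add: list_all2_refl)
    ultimately show "f xs \<le> P xs" using thr_val that by simp
    show "P xs \<le> f xs" unfolding P_def
    proof (rule sup_fold_lub, clarify)
      fix a assume "a \<in> set As"
      then have a: "length a = n" using As by simp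
      show "inf (f a) (thr a xs) \<le> f xs"
        using thr_val[OF a that] fm[OF a that] by (auto intro: le_infI1)
    qed
  qed
  ultimately show ?thesis using agg unfolding pol01_def aggregation_def by blast
qed

theorem mainTheorem5:
  fixes L :: "'a::{finite, bounded_lattice} itself"
  shows "(\<forall>n\<ge>1. \<forall>f :: 'a list \<Rightarrow> 'a. aggregation n f \<longleftrightarrow> pol01 n f)
    \<longleftrightarrow> (\<forall>T :: ('a \<times> 'a) set. tolerance T \<longrightarrow> T = Id \<or> T = UNIV)"
proof
  assume TS: "\<forall>T :: ('a \<times> 'a) set. tolerance T \<longrightarrow> T = Id \<or> T = UNIV"
  show "\<forall>n\<ge>1. \<forall>f :: 'a list \<Rightarrow> 'a. aggregation n f \<longleftrightarrow> pol01 n f"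
    using agg_pol01[OF TS] pol01_agg by blast
next
  assume H: "\<forall>n\<ge>1. \<forall>f :: 'a list \<Rightarrow> 'a. aggregation n f \<longleftrightarrow> pol01 n f"
  show "\<forall>T :: ('a \<times> 'a) set. tolerance T \<longrightarrow> T = Id \<or> T = UNIV"
  proof (intro allI impI, rule ccontr)
    fix T :: "('a \<times> 'a) set"
    assume tT: "tolerance T" and nt: "\<not> (T = Id \<or> T = UNIV)"
    have r: "\<And>x. (x,x) \<in> T" and s: "\<And>x y. (x,y) \<in> T \<Longrightarrow> (y,x) \<in> T"
      and cp: "\<And>a b c d. (a,b) \<in> T \<Longrightarrow> (c,d) \<in> T \<Longrightarrow> (sup a c, sup b d) \<in> T \<and> (inf a c, inf b d) \<in> T"
      using tT unfolding tolerance_def refl_on_def sym_def by blast+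
    have nbt: "(bot, top) \<notin> T" using tol_bot_top[OF tT] nt by blast
    obtain a b where ab: "(a,b) \<in> T" "a \<noteq> b" using nt r by auto
    obtain c d where cd: "(c,d) \<in> T" "c < d"
    proof (cases "a = sup a b")
      case True
      then have "b < a" using ab(2) by (metis sup.absorb_iff1 order.not_eq_order_implies_strict)
      then show ?thesis using that s[OF ab(1)] by blast
    next
      case False
      have "(sup a a, sup b a) \<in> T" using cp[OF ab(1) r[of a]] by blast
      then have "(a, sup a b) \<in> T" by (simp add: sup_commute)
      moreover have "a < sup a b" using False by (simp add: order.not_eq_order_implies_strict)
      ultimately show ?thesis using that by blast
    qed
    define f where "f = (\<lambda>xs::'a list. if d \<le> xs!0 then top else (bot::'a))"
    have "d \<noteq> bot" using cd(2) by (metis bot.extremum_strict)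
    then have "aggregation 1 f" unfolding aggregation_def f_def
      by (auto simp: list_all2_conv_all_nth bot_unique intro: order_trans)
    then have "pol01 1 f" using H by blast
    then obtain p where p: "p \<in> polys 1" "\<forall>xs. length xs = 1 \<longrightarrow> f xs = p xs"
      unfolding pol01_def by blast
    have "(p [c], p [d]) \<in> T" by (rule polys_tol[OF p(1) tT]) (simp add: cd(1))
    moreover have "p [c] = bot" "p [d] = top" using p(2)[rule_format, of "[c]"] p(2)[rule_format, of "[d]"] cd(2)
      by (auto simp: f_def less_le_not_le)
    ultimately show False using nbt by simp
  qed
qed

end
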